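(* Let $G,H$ be graphs (connected or not, each with at least one vertex), and write $a=\widetilde\iota(G)$, $b=\widetilde\iota(H)$. Then $$\iota(G+H)=\begin{cases}\dfrac{ab-1}{a+b-2}, & a,b<\infty,\ a+b\neq2,\\[2mm] 1, & a=b=1,\\ \infty, & a+b=2,\ (a,b)\neq(1,1),\\ b, & a=\infty,\ b<\infty,\\ a, & b=\infty,\ a<\infty,\\ \infty, & a=b=\infty.\end{cases}$$
   Context: For a connected graph $G$ on vertices $v_1,\dots,v_n$, its distance matrix is $D=(d(v_i,v_j))_{i,j=1}^n$, where $d$ is the shortest-path distance; $\vec 1$ denotes the all-ones vector. $G$ is distance exceptional if $D\vec x=\vec 1$ has no solution. Curvature index $\iota(G)\in\mathbb{R}\cup\{\infty\}$ of a connected graph: if $D\vec x=\vec1$ has no solution or has a solution with $\vec 1^\top\vec x\neq0$, then $\iota(G)$ is the unique real number with $\{D\vec x:\vec 1^\top\vec x=1\}\cap\mathbb{R}\vec 1=\{\iota(G)\vec 1\}$; otherwise (solutions exist and all have $\vec 1^\top\vec x=0$) $\iota(G)=\infty$. The join $G+H$ is obtained from the disjoint union of $G$ and $H$ by adding all edges between $V(G)$ and $V(H)$. For a graph $G$ (possibly disconnected) on $n$ vertices, $\widetilde D(G)\in\mathbb{R}^{n\times n}$ is the principal submatrix indexed by $V(G)$ of the distance matrix of the cone $G+\mathsf{K}_1$; i.e. $\widetilde D(G)_{uv}=0$ if $u=v$, $1$ if $u\sim v$, and $2$ otherwise. The modified curvature index $\widetilde\iota(G)\in\mathbb{R}\cup\{\infty\}$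 is defined exactly as $\iota$ with $D$ replaced by $\widetilde D(G)$: if $\widetilde D(G)\vec x=\vec 1$ has no solution or has a solution with $\vec1^\top\vec x\ne0$, then $\widetilde\iota(G)$ is the unique real with $\{\widetilde D(G)\vec x:\vec1^\top\vec x=1\}\cap\mathbb{R}\vec1=\{\widetilde\iota(G)\vec1\}$; otherwise $\widetilde\iota(G)=\infty$. *)

theory Defs
  imports "HOL-Analysis.Analysis" "HOL-Library.Extended_Real"
begin

text \<open>Real vectors indexed by V are functions V \<Rightarrow> real (values outside V
are irrelevant); a V\<times>V matrix is a function of two vertices.\<close>

definition graph :: "'a set \<Rightarrow> ('a \<Rightarrow> 'a \<Rightarrow> bool) \<Rightarrow> bool" where
  "graph V E \<longleftrightarrow> finite V \<and> V \<noteq> {} \<and> (\<forall>u v. E u v \<longrightarrow> E v u)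
     \<and> (\<forall>u. \<not> E u u) \<and> (\<forall>u v. E u v \<longrightarrow> u \<in> V \<and> v \<in> V)"

definition walk_of_len :: "'a set \<Rightarrow> ('a \<Rightarrow> 'a \<Rightarrow> bool) \<Rightarrow> 'a \<Rightarrow> 'a \<Rightarrow> nat \<Rightarrow> bool" where
  "walk_of_len V E u v n \<longleftrightarrow> (\<exists>xs. length xs = Suc n \<and> xs ! 0 = u \<and> xs ! n = v
      \<and> set xs \<subseteq> V \<and> (\<forall>i<n. E (xs ! i) (xs ! Suc i)))"

text \<open>Shortest-path distance (meaningful when u, v are in the same component).\<close>
definition graph_dist :: "'a set \<Rightarrow> ('a \<Rightarrow> 'a \<Rightarrow> bool) \<Rightarrow> 'a \<Rightarrow> 'a \<Rightarrow> nat" where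
  "graph_dist V E u v = (LEAST n. walk_of_len V E u v n)"

definition connected_graph :: "'a set \<Rightarrow> ('a \<Rightarrow> 'a \<Rightarrow> bool) \<Rightarrow> bool" where
  "connected_graph V E \<longleftrightarrow> graph V E \<and> (\<forall>u\<in>V. \<forall>v\<in>V. \<exists>n. walk_of_len V E u v n)"

definition dist_matrix :: "'a set \<Rightarrow> ('a \<Rightarrow> 'a \<Rightarrow> bool) \<Rightarrow> 'a \<Rightarrow> 'a \<Rightarrow> real" where
  "dist_matrix V E u v = real (graph_dist V E u v)"

text \<open>Modified distance matrix: principal submatrix of the distance matrix of the cone.\<close>
definition mod_dist_matrix :: "('a \<Rightarrow> 'a \<Rightarrow> bool) \<Rightarrow> 'a \<Rightarrow> 'a \<Rightarrow> real" where
  "mod_dist_matrix E u v = (if u = v then 0 else if E u v then 1 else 2)"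

definition mat_vec :: "'a set \<Rightarrow> ('a \<Rightarrow> 'a \<Rightarrow> real) \<Rightarrow> ('a \<Rightarrow> real) \<Rightarrow> 'a \<Rightarrow> real" where
  "mat_vec V M x u = (\<Sum>v\<in>V. M u v * x v)"

text \<open>Generic curvature index of a square matrix M indexed by V, valued in
  \<real> \<union> {\<infinity>} (rendered in ereal; the value -\<infinity> never occurs).\<close>
definition curv_index :: "'a set \<Rightarrow> ('a \<Rightarrow> 'a \<Rightarrow> real) \<Rightarrow> ereal" where
  "curv_index V M =
    (if (\<not> (\<exists>x. \<forall>u\<in>V. mat_vec V M x u = 1))
        \<or> (\<exists>x. (\<forall>u\<in>V. mat_vec V M x u = 1) \<and> (\<Sum>v\<in>V. x v) \<noteq> 0)
     then ereal (THE c. {d. \<exists>x. (\<Sum>v\<in>V. x v) = 1 \<and> (\<forall>u\<in>V. mat_vec V M x u = d)} = {c})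
     else \<infinity>)"

definition curvature_index :: "'a set \<Rightarrow> ('a \<Rightarrow> 'a \<Rightarrow> bool) \<Rightarrow> ereal" where
  "curvature_index V E = curv_index V (dist_matrix V E)"

definition mod_curvature_index :: "'a set \<Rightarrow> ('a \<Rightarrow> 'a \<Rightarrow> bool) \<Rightarrow> ereal" where
  "mod_curvature_index V E = curv_index V (mod_dist_matrix E)"

definition join_verts :: "'a set \<Rightarrow> 'b set \<Rightarrow> ('a + 'b) set" where
  "join_verts V W = Inl ` V \<union> Inr ` W"

fun join_edges :: "'a set \<Rightarrow> ('a \<Rightarrow> 'a \<Rightarrow> bool) \<Rightarrow> 'b set \<Rightarrow> ('b \<Rightarrow> 'b \<Rightarrow> bool)
    \<Rightarrow> 'a + 'b \<Rightarrow> 'a + 'b \<Rightarrow> bool" where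
  "join_edges V E W F (Inl a) (Inl b) = E a b"
| "join_edges V E W F (Inr a) (Inr b) = F a b"
| "join_edges V E W F (Inl a) (Inr b) = (a \<in> V \<and> b \<in> W)"
| "join_edges V E W F (Inr a) (Inl b) = (a \<in> W \<and> b \<in> V)"

end

theory Submission
  imports Defs
begin


lemma fredholm:
  fixes A :: "'r \<Rightarrow> 'c \<Rightarrow> real" and b :: "'r \<Rightarrow> real"
  assumes "finite V" "finite U"
  shows "(\<exists>x. \<forall>u\<in>U. (\<Sum>v\<in>V. A u v * x v) = b u)
       \<or> (\<exists>z. (\<forall>v\<in>V. (\<Sum>u\<in>U. z u * A u v) = 0) \<and> (\<Sum>u\<in>U. z u * b u) \<noteq> 0)"
  using assms
proof (induction V arbitrary: U A b rule: finite_induct)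
  case empty
  show ?case
  proof (cases "\<forall>u\<in>U. b u = 0")
    case True then show ?thesis by auto
  next
    case False
    then obtain u0 where u0: "u0 \<in> U" "b u0 \<noteq> 0" by auto
    have "(\<Sum>u\<in>U. (if u = u0 then 1 else 0) * b u) = b u0"
    proof -
      have eq: "(\<lambda>u. (if u = u0 then 1 else 0) * b u) = (\<lambda>u. if u = u0 then b u else 0)" by auto
      show ?thesis by (simp only: eq) (simp add: u0 empty.prems)
    qed
    then show ?thesis using u0 by (intro disjI2 exI[of _ "\<lambda>u. if u = u0 then 1 else 0"]) auto
  qed
next
  case (insert v V)
  show ?case
  proof (cases "\<forall>u\<in>U. A u v = 0")
    case True
    from insert.IH[OF insert.prems, of A b] show ?thesis
    proof
      assume "\<exists>x. \<forall>u\<in>U. (\<Sum>v\<in>V. A u v * x v) = b u"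
      then obtain x where "\<forall>u\<in>U. (\<Sum>v\<in>V. A u v * x v) = b u" by blast
      then show ?thesis using True insert.hyps by (intro disjI1 exI[of _ x]) auto
    next
      assume "\<exists>z. (\<forall>v\<in>V. (\<Sum>u\<in>U. z u * A u v) = 0) \<and> (\<Sum>u\<in>U. z u * b u) \<noteq> 0"
      then obtain z where "(\<forall>v\<in>V. (\<Sum>u\<in>U. z u * A u v) = 0)" "(\<Sum>u\<in>U. z u * b u) \<noteq> 0" by blast
      then show ?thesis using True by (intro disjI2 exI[of _ z]) auto
    qed
  next
    case False
    then obtain u1 where u1: "u1 \<in> U" "A u1 v \<noteq> 0" by auto
    define c where "c u = A u v / A u1 v" for u
    define A' where "A' u w = A u w - c u * A u1 w" for u w
    define b' where "b' u = b u - c u * b u1" for u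
    have cv: "A u v = c u * A u1 v" for u using u1 by (simp add: c_def)
    have fU': "finite (U - {u1})" using insert.prems by simp
    have sumU: "(\<Sum>u\<in>U. f u) = f u1 + (\<Sum>u\<in>U - {u1}. f u)" for f :: "'r \<Rightarrow> real"
      using insert.prems u1 by (simp add: sum.remove)
    from insert.IH[OF fU', of A' b'] show ?thesis
    proof
      assume "\<exists>x. \<forall>u\<in>U - {u1}. (\<Sum>v\<in>V. A' u v * x v) = b' u"
      then obtain x' where x': "\<forall>u\<in>U - {u1}. (\<Sum>v\<in>V. A' u v * x' v) = b' u" by blast
      define s1 where "s1 = (\<Sum>w\<in>V. A u1 w * x' w)"
      define x where "x = x'(v := (b u1 - s1) / A u1 v)"
      have sV: "(\<Sum>w\<in>V. A u w * x w) = (\<Sum>w\<in>V. A u w * x' w)" for u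
        using insert.hyps by (intro sum.cong) (auto simp: x_def)
      have sI: "(\<Sum>w\<in>insert v V. A u w * x w) = A u v * ((b u1 - s1) / A u1 v) + (\<Sum>w\<in>V. A u w * x' w)" for u
        using insert.hyps sV by (simp add: x_def)
      have "\<forall>u\<in>U. (\<Sum>w\<in>insert v V. A u w * x w) = b u"
      proof
        fix u assume u: "u \<in> U"
        show "(\<Sum>w\<in>insert v V. A u w * x w) = b u"
        proof (cases "u = u1")
          case True then show ?thesis using sI[of u1] u1 by (simp add: s1_def)
        next
          case False
          have "(\<Sum>w\<in>V. A u w * x' w) = (\<Sum>w\<in>V. A' u w * x' w) + c u * s1"
            by (simp add: A'_def s1_def sum_distrib_left algebra_simps sum.distrib sum_subtractf)
          also have "\<dots> = b' u + c u * s1" using x' u False by simp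
          moreover have "A u v * ((b u1 - s1) / A u1 v) = c u * (b u1 - s1)" using u1 by (simp add: c_def)
          ultimately show ?thesis using sI[of u] by (simp add: b'_def algebra_simps)
        qed
      qed
      then show ?thesis by blast
    next
      assume "\<exists>z. (\<forall>w\<in>V. (\<Sum>u\<in>U - {u1}. z u * A' u w) = 0) \<and> (\<Sum>u\<in>U - {u1}. z u * b' u) \<noteq> 0"
      then obtain z' where z': "\<forall>w\<in>V. (\<Sum>u\<in>U - {u1}. z' u * A' u w) = 0"
          "(\<Sum>u\<in>U - {u1}. z' u * b' u) \<noteq> 0" by blast
      define t where "t = (\<Sum>u\<in>U - {u1}. z' u * c u)"
      define z where "z = z'(u1 := - t)"
      have zU: "(\<Sum>u\<in>U - {u1}. z u * f u) = (\<Sum>u\<in>U - {u1}. z' u * f u)" for f :: "'r \<Rightarrow> real"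
        by (intro sum.cong) (auto simp: z_def)
      have zu1: "z u1 = - t" by (simp add: z_def)
      have gen: "(\<Sum>u\<in>U - {u1}. z' u * (g u + c u * k)) = (\<Sum>u\<in>U - {u1}. z' u * g u) + t * k"
        for g :: "'r \<Rightarrow> real" and k
        by (simp add: t_def distrib_left sum.distrib sum_distrib_right mult.assoc)
      have "\<forall>w\<in>insert v V. (\<Sum>u\<in>U. z u * A u w) = 0"
      proof
        fix w assume w: "w \<in> insert v V"
        have e: "(\<Sum>u\<in>U. z u * A u w) = - t * A u1 w + (\<Sum>u\<in>U - {u1}. z' u * A u w)"
          unfolding sumU[of "\<lambda>u. z u * A u w"] zU zu1 by simp
        show "(\<Sum>u\<in>U. z u * A u w) = 0"
        proof (cases "w = v")
          case True
          have "(\<Sum>u\<in>U - {u1}. z' u * A u w) = (\<Sum>u\<in>U - {u1}. z' u * (0 + c u * A u1 v))"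
            using True by (intro sum.cong refl) (metis cv add_0)
          also have "\<dots> = t * A u1 v" by (subst gen) simp
          finally show ?thesis using e True by simp
        next
          case False
          then have wV: "w \<in> V" using w by simp
          have "(\<Sum>u\<in>U - {u1}. z' u * A u w) = (\<Sum>u\<in>U - {u1}. z' u * (A' u w + c u * A u1 w))"
            by (simp add: A'_def)
          also have "\<dots> = t * A u1 w" using gen z'(1) wV by simp
          finally show ?thesis using e by simp
        qed
      qed
      moreover have "(\<Sum>u\<in>U. z u * b u) \<noteq> 0"
      proof -
        have "(\<Sum>u\<in>U. z u * b u) = - t * b u1 + (\<Sum>u\<in>U - {u1}. z' u * b u)"
          unfolding sumU[of "\<lambda>u. z u * b u"] zU zu1 by simp
        also have "(\<Sum>u\<in>U - {u1}. z' u * b u) = (\<Sum>u\<in>U - {u1}. z' u * (b' u + c u * b u1))"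
          by (simp add: b'_def)
        also have "\<dots> = (\<Sum>u\<in>U - {u1}. z' u * b' u) + t * b u1" by (rule gen)
        finally show ?thesis using z'(2) by simp
      qed
      ultimately show ?thesis by blast
    qed
  qed
qed



definition Sset :: "'a set \<Rightarrow> ('a \<Rightarrow> 'a \<Rightarrow> real) \<Rightarrow> real set" where
  "Sset V M = {d. \<exists>x. (\<Sum>v\<in>V. x v) = 1 \<and> (\<forall>u\<in>V. mat_vec V M x u = d)}"

definition symm_on :: "'a set \<Rightarrow> ('a \<Rightarrow> 'a \<Rightarrow> real) \<Rightarrow> bool" where
  "symm_on V M \<longleftrightarrow> (\<forall>u\<in>V. \<forall>v\<in>V. M u v = M v u)"

lemma mat_vec_lin: "mat_vec V M (\<lambda>v. s * x v + t * y v) u = s * mat_vec V M x u + t * mat_vec V M y u"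
  by (simp add: mat_vec_def sum.distrib sum_distrib_left algebra_simps)

lemma mat_vec_scale: "mat_vec V M (\<lambda>v. x v / s) u = mat_vec V M x u / s"
  by (simp add: mat_vec_def sum_divide_distrib)

lemma bilin_sym:
  assumes "symm_on V M"
  shows "(\<Sum>u\<in>V. x u * mat_vec V M y u) = (\<Sum>u\<in>V. y u * mat_vec V M x u)"
proof -
  have "(\<Sum>u\<in>V. x u * mat_vec V M y u) = (\<Sum>u\<in>V. \<Sum>v\<in>V. x u * M u v * y v)"
    by (simp add: mat_vec_def sum_distrib_left mult.assoc)
  also have "\<dots> = (\<Sum>v\<in>V. \<Sum>u\<in>V. x u * M u v * y v)" by (rule sum.swap)
  also have "\<dots> = (\<Sum>v\<in>V. y v * mat_vec V M x v)"
    unfolding mat_vec_def sum_distrib_left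
    using assms unfolding symm_on_def by (intro sum.cong refl) (simp add: mult.commute mult.left_commute)
  finally show ?thesis .
qed

lemma S_unique:
  assumes "symm_on V M" "d1 \<in> Sset V M" "d2 \<in> Sset V M"
  shows "d1 = d2"
proof -
  obtain x where x: "(\<Sum>v\<in>V. x v) = 1" "\<forall>u\<in>V. mat_vec V M x u = d1" using assms(2) by (auto simp: Sset_def)
  obtain y where y: "(\<Sum>v\<in>V. y v) = 1" "\<forall>u\<in>V. mat_vec V M y u = d2" using assms(3) by (auto simp: Sset_def)
  have "(\<Sum>u\<in>V. x u * mat_vec V M y u) = d2"
    using x y by (simp add: sum_distrib_right[symmetric])
  moreover have "(\<Sum>u\<in>V. y u * mat_vec V M x u) = d1"
    using x y by (simp add: sum_distrib_right[symmetric])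
  ultimately show ?thesis using bilin_sym[OF assms(1)] by metis
qed

lemma no_sol_S:
  assumes "finite V" "symm_on V M" "\<not> (\<exists>x. \<forall>u\<in>V. mat_vec V M x u = 1)"
  shows "0 \<in> Sset V M"
proof -
  from fredholm[OF assms(1) assms(1), of M "\<lambda>_. 1"] assms(3)
  obtain z where z: "\<forall>v\<in>V. (\<Sum>u\<in>V. z u * M u v) = 0" "(\<Sum>u\<in>V. z u) \<noteq> 0"
    by (auto simp: mat_vec_def)
  define s where "s = (\<Sum>u\<in>V. z u)"
  have "\<forall>v\<in>V. mat_vec V M z v = 0"
  proof
    fix v assume v: "v \<in> V"
    have "mat_vec V M z v = (\<Sum>u\<in>V. z u * M u v)"
      unfolding mat_vec_def using assms(2) v unfolding symm_on_def
      by (intro sum.cong refl) (simp add: mult.commute)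
    then show "mat_vec V M z v = 0" using z v by simp
  qed
  then have "\<forall>v\<in>V. mat_vec V M (\<lambda>u. z u / s) v = 0" by (simp add: mat_vec_scale)
  moreover have "(\<Sum>u\<in>V. z u / s) = 1" using z(2) by (simp add: s_def sum_divide_distrib[symmetric])
  ultimately show ?thesis unfolding Sset_def by blast
qed

lemma curv_S_mem:
  assumes "finite V" "symm_on V M" "d \<in> Sset V M"
  shows "curv_index V M = ereal d"
proof -
  obtain y where y: "(\<Sum>v\<in>V. y v) = 1" "\<forall>u\<in>V. mat_vec V M y u = d" using assms(3) by (auto simp: Sset_def)
  have cond: "(\<not> (\<exists>x. \<forall>u\<in>V. mat_vec V M x u = 1))
        \<or> (\<exists>x. (\<forall>u\<in>V. mat_vec V M x u = 1) \<and> (\<Sum>v\<in>V. x v) \<noteq> 0)"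
  proof (cases "d = 0")
    case False
    have "\<forall>u\<in>V. mat_vec V M (\<lambda>v. y v / d) u = 1" using y False by (simp add: mat_vec_scale)
    moreover have "(\<Sum>v\<in>V. y v / d) \<noteq> 0" using y False by (simp add: sum_divide_distrib[symmetric])
    ultimately show ?thesis by blast
  next
    case True
    show ?thesis
    proof (cases "\<exists>x. \<forall>u\<in>V. mat_vec V M x u = 1")
      case False then show ?thesis by blast
    next
      case True
      then obtain x where x: "\<forall>u\<in>V. mat_vec V M x u = 1" by blast
      have "\<exists>x. (\<forall>u\<in>V. mat_vec V M x u = 1) \<and> (\<Sum>v\<in>V. x v) \<noteq> 0"
      proof (cases "(\<Sum>v\<in>V. x v) = 0")
        case False then show ?thesis using x by blast
      next
        case True
        have "\<forall>u\<in>V. mat_vec V M (\<lambda>v. 1 * x v + 1 * y v) u = 1"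
          using x y \<open>d = 0\<close> by (simp only: mat_vec_lin) simp
        moreover have "(\<Sum>v\<in>V. 1 * x v + 1 * y v) \<noteq> 0" using True y by (simp add: sum.distrib)
        ultimately show ?thesis by blast
      qed
      then show ?thesis by blast
    qed
  qed
  have "Sset V M = {d}" using S_unique[OF assms(2)] assms(3) by blast
  then show ?thesis using cond unfolding curv_index_def Sset_def[symmetric] by simp
qed

lemma curv_S_empty:
  assumes "finite V" "symm_on V M" "Sset V M = {}"
  shows "curv_index V M = \<infinity>"
proof -
  have "\<exists>x. \<forall>u\<in>V. mat_vec V M x u = 1" using no_sol_S[OF assms(1,2)] assms(3) by blast
  moreover have "\<not> (\<exists>x. (\<forall>u\<in>V. mat_vec V M x u = 1) \<and> (\<Sum>v\<in>V. x v) \<noteq> 0)"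
  proof
    assume "\<exists>x. (\<forall>u\<in>V. mat_vec V M x u = 1) \<and> (\<Sum>v\<in>V. x v) \<noteq> 0"
    then obtain x where x: "\<forall>u\<in>V. mat_vec V M x u = 1" "(\<Sum>v\<in>V. x v) \<noteq> 0" by blast
    define s where "s = (\<Sum>v\<in>V. x v)"
    have "\<forall>u\<in>V. mat_vec V M (\<lambda>v. x v / s) u = 1 / s" using x by (simp add: mat_vec_scale)
    moreover have "(\<Sum>v\<in>V. x v / s) = 1" using x by (simp add: s_def sum_divide_distrib[symmetric])
    ultimately have "1 / s \<in> Sset V M" unfolding Sset_def by blast
    then show False using assms(3) by simp
  qed
  ultimately show ?thesis unfolding curv_index_def by auto
qed

lemma curv_cases:
  assumes "finite V" "symm_on V M"
  shows "(curv_index V M = \<infinity> \<and> Sset V M = {}) \<or> (\<exists>d. curv_index V M = ereal d \<and> d \<in> Sset V M)"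
  using curv_S_mem[OF assms] curv_S_empty[OF assms] by blast

lemma P_fin:
  assumes "finite V" "symm_on V M" "curv_index V M = ereal a"
  shows "(\<exists>x. (\<Sum>v\<in>V. x v) = \<sigma> \<and> (\<forall>u\<in>V. mat_vec V M x u = e)) \<longleftrightarrow> e = \<sigma> * a"
proof -
  have aS: "a \<in> Sset V M" using curv_cases[OF assms(1,2)] assms(3) by auto
  then obtain x0 where x0: "(\<Sum>v\<in>V. x0 v) = 1" "\<forall>u\<in>V. mat_vec V M x0 u = a" by (auto simp: Sset_def)
  show ?thesis
  proof
    assume "\<exists>x. (\<Sum>v\<in>V. x v) = \<sigma> \<and> (\<forall>u\<in>V. mat_vec V M x u = e)"
    then obtain x where x: "(\<Sum>v\<in>V. x v) = \<sigma>" "\<forall>u\<in>V. mat_vec V M x u = e" by blast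
    show "e = \<sigma> * a"
    proof (cases "\<sigma> = 0")
      case False
      have "\<forall>u\<in>V. mat_vec V M (\<lambda>v. x v / \<sigma>) u = e / \<sigma>" using x by (simp add: mat_vec_scale)
      moreover have "(\<Sum>v\<in>V. x v / \<sigma>) = 1" using x False by (simp add: sum_divide_distrib[symmetric])
      ultimately have "e / \<sigma> \<in> Sset V M" unfolding Sset_def by blast
      then have "e / \<sigma> = a" using S_unique[OF assms(2)] aS by blast
      then show ?thesis using False by (simp add: field_simps)
    next
      case True
      show ?thesis
      proof (rule ccontr)
        assume ne: "e \<noteq> \<sigma> * a"
        then have e0: "e \<noteq> 0" using True by simp
        have "\<forall>u\<in>V. mat_vec V M (\<lambda>v. (1/e) * x v + 1 * x0 v) u = 1 + a"
          using x x0 e0 by (simp only: mat_vec_lin) simp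
        moreover have "(\<Sum>v\<in>V. (1/e) * x v + 1 * x0 v) = (1/e) * (\<Sum>v\<in>V. x v) + (\<Sum>v\<in>V. x0 v)"
          by (simp only: sum.distrib sum_distrib_left[symmetric] mult_1)
        then have "(\<Sum>v\<in>V. (1/e) * x v + 1 * x0 v) = 1" using x x0 True by simp
        ultimately have "1 + a \<in> Sset V M" unfolding Sset_def by blast
        then have "1 + a = a" using S_unique[OF assms(2) _ aS] by blast
        then show False by simp
      qed
    qed
  next
    assume e: "e = \<sigma> * a"
    have "\<forall>u\<in>V. mat_vec V M (\<lambda>v. \<sigma> * x0 v + 0 * x0 v) u = e"
      using x0 e by (simp only: mat_vec_lin) simp
    moreover have "(\<Sum>v\<in>V. \<sigma> * x0 v + 0 * x0 v) = \<sigma>" using x0 by (simp add: sum_distrib_left[symmetric])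
    ultimately show "\<exists>x. (\<Sum>v\<in>V. x v) = \<sigma> \<and> (\<forall>u\<in>V. mat_vec V M x u = e)" by blast
  qed
qed

lemma P_inf:
  assumes "finite V" "symm_on V M" "curv_index V M = \<infinity>"
  shows "(\<exists>x. (\<Sum>v\<in>V. x v) = \<sigma> \<and> (\<forall>u\<in>V. mat_vec V M x u = e)) \<longleftrightarrow> \<sigma> = 0"
proof
  assume "\<exists>x. (\<Sum>v\<in>V. x v) = \<sigma> \<and> (\<forall>u\<in>V. mat_vec V M x u = e)"
  then obtain x where x: "(\<Sum>v\<in>V. x v) = \<sigma>" "\<forall>u\<in>V. mat_vec V M x u = e" by blast
  show "\<sigma> = 0"
  proof (rule ccontr)
    assume s: "\<sigma> \<noteq> 0"
    have "\<forall>u\<in>V. mat_vec V M (\<lambda>v. x v / \<sigma>) u = e / \<sigma>" using x by (simp add: mat_vec_scale)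
    moreover have "(\<Sum>v\<in>V. x v / \<sigma>) = 1" using x s by (simp add: sum_divide_distrib[symmetric])
    ultimately have "e / \<sigma> \<in> Sset V M" unfolding Sset_def by blast
    then show False using curv_S_mem[OF assms(1,2)] assms(3) by simp
  qed
next
  assume s: "\<sigma> = 0"
  have "\<not> ((\<not> (\<exists>x. \<forall>u\<in>V. mat_vec V M x u = 1))
        \<or> (\<exists>x. (\<forall>u\<in>V. mat_vec V M x u = 1) \<and> (\<Sum>v\<in>V. x v) \<noteq> 0))"
    using assms(3) unfolding curv_index_def by (auto split: if_splits)
  then obtain x1 where x1: "\<forall>u\<in>V. mat_vec V M x1 u = 1" "(\<Sum>v\<in>V. x1 v) = 0" by blast
  have "\<forall>u\<in>V. mat_vec V M (\<lambda>v. e * x1 v + 0 * x1 v) u = e"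
    using x1 by (simp only: mat_vec_lin) simp
  moreover have "(\<Sum>v\<in>V. e * x1 v + 0 * x1 v) = \<sigma>" using x1 s by (simp add: sum_distrib_left[symmetric])
  ultimately show "\<exists>x. (\<Sum>v\<in>V. x v) = \<sigma> \<and> (\<forall>u\<in>V. mat_vec V M x u = e)" by blast
qed

lemma curv_not_minf: "curv_index V M = \<infinity> \<or> (\<exists>d. curv_index V M = ereal d)"
  unfolding curv_index_def by auto



lemma walk0: "walk_of_len Vs Es p q 0 \<longleftrightarrow> p = q \<and> p \<in> Vs"
proof
  assume "walk_of_len Vs Es p q 0"
  then obtain xs where "length xs = 1" "xs ! 0 = p" "xs ! 0 = q" "set xs \<subseteq> Vs"
    unfolding walk_of_len_def by auto
  then show "p = q \<and> p \<in> Vs" by (metis nth_mem subsetD zero_less_one)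
next
  assume "p = q \<and> p \<in> Vs"
  then show "walk_of_len Vs Es p q 0" unfolding walk_of_len_def by (intro exI[of _ "[p]"]) auto
qed

lemma walk1: "walk_of_len Vs Es p q 1 \<longleftrightarrow> Es p q \<and> p \<in> Vs \<and> q \<in> Vs"
proof
  assume "walk_of_len Vs Es p q 1"
  then obtain xs where h: "length xs = Suc 1" "xs ! 0 = p" "xs ! 1 = q" "set xs \<subseteq> Vs"
     "\<forall>i<1. Es (xs!i) (xs! Suc i)"
    unfolding walk_of_len_def by blast
  have "xs ! 0 \<in> set xs" "xs ! 1 \<in> set xs" using h(1) by (auto intro!: nth_mem)
  then show "Es p q \<and> p \<in> Vs \<and> q \<in> Vs" using h by auto
next
  assume "Es p q \<and> p \<in> Vs \<and> q \<in> Vs"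
  then show "walk_of_len Vs Es p q 1" unfolding walk_of_len_def by (intro exI[of _ "[p,q]"]) auto
qed

lemma walk1': "walk_of_len Vs Es p q (Suc 0) \<longleftrightarrow> Es p q \<and> p \<in> Vs \<and> q \<in> Vs"
  using walk1 by (metis One_nat_def)

lemma walk2: "Es p r \<Longrightarrow> Es r q \<Longrightarrow> p \<in> Vs \<Longrightarrow> q \<in> Vs \<Longrightarrow> r \<in> Vs \<Longrightarrow> walk_of_len Vs Es p q 2"
  unfolding walk_of_len_def
  apply (intro exI[of _ "[p,r,q]"])
  apply (auto simp: less_Suc_eq numeral_2_eq_2)
  done

lemma gdist:
  assumes "p \<in> Vs" "q \<in> Vs" "p \<noteq> q \<and> \<not> Es p q \<Longrightarrow> \<exists>r\<in>Vs. Es p r \<and> Es r q"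
  shows "graph_dist Vs Es p q = (if p = q then 0 else if Es p q then 1 else 2)"
proof (cases "p = q")
  case True
  have w: "walk_of_len Vs Es p q 0" by (simp add: walk0 True assms(2))
  have "graph_dist Vs Es p q = 0" unfolding graph_dist_def using w by (rule Least_eq_0)
  then show ?thesis using True by simp
next
  case ne: False
  show ?thesis
  proof (cases "Es p q")
    case True
    have "walk_of_len Vs Es p q 1" using True assms(1,2) by (intro walk1[THEN iffD2]) simp
    moreover have "walk_of_len Vs Es p q m \<Longrightarrow> 1 \<le> m" for m
      using ne walk0[of Vs Es p q] by (cases m) auto
    ultimately have "graph_dist Vs Es p q = 1" unfolding graph_dist_def by (rule Least_equality)
    then show ?thesis using ne True by simp
  next
    case False
    obtain r where r: "r \<in> Vs" "Es p r" "Es r q" using assms(3)[OF conjI[OF ne False]] by blast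
    have "walk_of_len Vs Es p q 2" by (rule walk2[OF r(2) r(3) assms(1) assms(2) r(1)])
    moreover have "walk_of_len Vs Es p q m \<Longrightarrow> 2 \<le> m" for m
    proof (rule ccontr)
      assume "walk_of_len Vs Es p q m" "\<not> 2 \<le> m"
      then have "m = 0 \<or> m = 1" by auto
      then show False using \<open>walk_of_len Vs Es p q m\<close> ne False by (auto simp: walk0 walk1 walk1')
    qed
    ultimately have "graph_dist Vs Es p q = 2" unfolding graph_dist_def by (rule Least_equality)
    then show ?thesis using ne False by simp
  qed
qed

fun jm :: "('a \<Rightarrow> 'a \<Rightarrow> bool) \<Rightarrow> ('b \<Rightarrow> 'b \<Rightarrow> bool) \<Rightarrow> 'a + 'b \<Rightarrow> 'a + 'b \<Rightarrow> real" where
  "jm E F (Inl u) (Inl v) = mod_dist_matrix E u v"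
| "jm E F (Inr u) (Inr v) = mod_dist_matrix F u v"
| "jm E F (Inl u) (Inr v) = 1"
| "jm E F (Inr u) (Inl v) = 1"

lemma join_dist:
  assumes "graph V E" "graph W F" "p \<in> join_verts V W" "q \<in> join_verts V W"
  shows "dist_matrix (join_verts V W) (join_edges V E W F) p q = jm E F p q"
proof -
  obtain v0 where v0: "v0 \<in> V" using assms(1) unfolding graph_def by auto
  obtain w0 where w0: "w0 \<in> W" using assms(2) unfolding graph_def by auto
  have ex: "\<exists>r\<in>join_verts V W. join_edges V E W F p r \<and> join_edges V E W F r q"
    if "p \<noteq> q" "\<not> join_edges V E W F p q"
    using assms(3,4) that v0 w0 unfolding join_verts_def
    apply (cases p; cases q)
    subgoal apply (rule bexI[of _ "Inr w0"]) by auto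
    subgoal by auto
    subgoal by auto
    subgoal apply (rule bexI[of _ "Inl v0"]) by auto
    done
  have g: "graph_dist (join_verts V W) (join_edges V E W F) p q =
     (if p = q then 0 else if join_edges V E W F p q then 1 else 2)"
    by (rule gdist[OF assms(3,4) ex]) auto
  show ?thesis using assms(3,4) unfolding dist_matrix_def g
    by (auto simp: mod_dist_matrix_def join_verts_def split: if_splits)
qed

lemma curv_cong:
  assumes "\<forall>u\<in>V. \<forall>v\<in>V. M u v = M' u v"
  shows "curv_index V M = curv_index V M'"
proof -
  have "u \<in> V \<Longrightarrow> mat_vec V M x u = mat_vec V M' x u" for x u
    using assms unfolding mat_vec_def by (intro sum.cong) auto
  then have eq: "(\<forall>u\<in>V. mat_vec V M x u = d) \<longleftrightarrow> (\<forall>u\<in>V. mat_vec V M' x u = d)" for x d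
    by auto
  show ?thesis unfolding curv_index_def by (simp only: eq)
qed

lemma mod_symm: "graph V E \<Longrightarrow> symm_on V (mod_dist_matrix E)"
  unfolding symm_on_def mod_dist_matrix_def graph_def by auto

lemma jm_symm: "graph V E \<Longrightarrow> graph W F \<Longrightarrow> symm_on (join_verts V W) (jm E F)"
  unfolding symm_on_def join_verts_def using mod_symm[of V E] mod_symm[of W F]
  unfolding symm_on_def by auto

lemma sum_join:
  assumes "finite V" "finite W"
  shows "(\<Sum>p\<in>join_verts V W. f p) = (\<Sum>v\<in>V. f (Inl v)) + (\<Sum>w\<in>W. f (Inr w))"
  unfolding join_verts_def using assms
  by (subst sum.union_disjoint) (auto simp: sum.reindex)

lemma S_join:
  assumes "graph V E" "graph W F"
  shows "d \<in> Sset (join_verts V W) (jm E F) \<longleftrightarrow>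
    (\<exists>\<sigma> \<tau>. \<sigma> + \<tau> = 1
       \<and> (\<exists>x. (\<Sum>v\<in>V. x v) = \<sigma> \<and> (\<forall>u\<in>V. mat_vec V (mod_dist_matrix E) x u = d - \<tau>))
       \<and> (\<exists>y. (\<Sum>v\<in>W. y v) = \<tau> \<and> (\<forall>u\<in>W. mat_vec W (mod_dist_matrix F) y u = d - \<sigma>)))"
proof -
  have fV: "finite V" and fW: "finite W" using assms unfolding graph_def by auto
  have mvl: "mat_vec (join_verts V W) (jm E F) z (Inl u) =
      mat_vec V (mod_dist_matrix E) (\<lambda>v. z (Inl v)) u + (\<Sum>w\<in>W. z (Inr w))" for z u
    unfolding mat_vec_def by (simp add: sum_join[OF fV fW])
  have mvr: "mat_vec (join_verts V W) (jm E F) z (Inr u) =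
      mat_vec W (mod_dist_matrix F) (\<lambda>v. z (Inr v)) u + (\<Sum>v\<in>V. z (Inl v))" for z u
    unfolding mat_vec_def by (simp add: sum_join[OF fV fW])
  have ball: "(\<forall>p\<in>join_verts V W. P p) \<longleftrightarrow> (\<forall>u\<in>V. P (Inl u)) \<and> (\<forall>w\<in>W. P (Inr w))" for P
    unfolding join_verts_def by auto
  show ?thesis
  proof
    assume "d \<in> Sset (join_verts V W) (jm E F)"
    then obtain z where z: "(\<Sum>p\<in>join_verts V W. z p) = 1" "\<forall>p\<in>join_verts V W. mat_vec (join_verts V W) (jm E F) z p = d"
      unfolding Sset_def by blast
    show "\<exists>\<sigma> \<tau>. \<sigma> + \<tau> = 1
       \<and> (\<exists>x. (\<Sum>v\<in>V. x v) = \<sigma> \<and> (\<forall>u\<in>V. mat_vec V (mod_dist_matrix E) x u = d - \<tau>))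
       \<and> (\<exists>y. (\<Sum>v\<in>W. y v) = \<tau> \<and> (\<forall>u\<in>W. mat_vec W (mod_dist_matrix F) y u = d - \<sigma>))"
      apply (rule exI[of _ "\<Sum>v\<in>V. z (Inl v)"], rule exI[of _ "\<Sum>w\<in>W. z (Inr w)"])
      using z unfolding sum_join[OF fV fW] ball mvl mvr
      by (intro conjI exI[of _ "\<lambda>v. z (Inl v)"] exI[of _ "\<lambda>v. z (Inr v)"]) auto
  next
    assume "\<exists>\<sigma> \<tau>. \<sigma> + \<tau> = 1
       \<and> (\<exists>x. (\<Sum>v\<in>V. x v) = \<sigma> \<and> (\<forall>u\<in>V. mat_vec V (mod_dist_matrix E) x u = d - \<tau>))
       \<and> (\<exists>y. (\<Sum>v\<in>W. y v) = \<tau> \<and> (\<forall>u\<in>W. mat_vec W (mod_dist_matrix F) y u = d - \<sigma>))"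
    then obtain \<sigma> \<tau> x y where h: "\<sigma> + \<tau> = 1" "(\<Sum>v\<in>V. x v) = \<sigma>" "\<forall>u\<in>V. mat_vec V (mod_dist_matrix E) x u = d - \<tau>"
      "(\<Sum>v\<in>W. y v) = \<tau>" "\<forall>u\<in>W. mat_vec W (mod_dist_matrix F) y u = d - \<sigma>" by blast
    define z where "z p = (case p of Inl v \<Rightarrow> x v | Inr w \<Rightarrow> y w)" for p
    have "(\<Sum>p\<in>join_verts V W. z p) = 1" using h unfolding sum_join[OF fV fW] by (simp add: z_def)
    moreover have "\<forall>p\<in>join_verts V W. mat_vec (join_verts V W) (jm E F) z p = d"
      unfolding ball mvl mvr using h by (simp add: z_def)
    ultimately show "d \<in> Sset (join_verts V W) (jm E F)" unfolding Sset_def by blast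
  qed
qed



lemma alg1: fixes ra rb D :: real assumes "D \<noteq> 0" "D = ra + rb - 2"
  shows "(ra*rb-1)/D - (1 - (rb-1)/D) = (rb-1)/D * ra"
proof -
  have "(ra*rb-1)/D - (1 - (rb-1)/D) = ((ra*rb-1) - D + (rb-1))/D" using assms(1) by (simp add: field_simps)
  also have "\<dots> = ((rb-1) * ra)/D" using assms(2) by (simp add: algebra_simps)
  finally show ?thesis by simp
qed
lemma alg2: fixes ra rb D :: real assumes "D \<noteq> 0" "D = ra + rb - 2"
  shows "(ra*rb-1)/D - (rb-1)/D = (1 - (rb-1)/D) * rb"
proof -
  have "(ra*rb-1)/D - (rb-1)/D = ((ra*rb-1) - (rb-1))/D" using assms(1) by (simp add: field_simps)
  also have "(ra*rb-1) - (rb-1) = (D - (rb - 1)) * rb" unfolding assms(2) by (simp add: algebra_simps)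
  hence "((ra*rb-1) - (rb-1))/D = (D - (rb - 1)) * rb / D" by simp
  finally show ?thesis using assms(1) by (simp add: field_simps)
qed

theorem theorem3p7:
  fixes V :: "'a set" and E :: "'a \<Rightarrow> 'a \<Rightarrow> bool"
    and W :: "'b set" and F :: "'b \<Rightarrow> 'b \<Rightarrow> bool"
  assumes "graph V E" and "graph W F"
  defines "a \<equiv> mod_curvature_index V E" and "b \<equiv> mod_curvature_index W F"
  defines "J \<equiv> curvature_index (join_verts V W) (join_edges V E W F)"
  shows "(a \<noteq> \<infinity> \<and> b \<noteq> \<infinity> \<and> a + b \<noteq> 2 \<longrightarrow>
            J = ereal ((real_of_ereal a * real_of_ereal b - 1) /
                       (real_of_ereal a + real_of_ereal b - 2)))
       \<and> (a = 1 \<and> b = 1 \<longrightarrow> J = 1)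
       \<and> (a + b = 2 \<and> \<not> (a = 1 \<and> b = 1) \<longrightarrow> J = \<infinity>)
       \<and> (a = \<infinity> \<and> b \<noteq> \<infinity> \<longrightarrow> J = b)
       \<and> (b = \<infinity> \<and> a \<noteq> \<infinity> \<longrightarrow> J = a)
       \<and> (a = \<infinity> \<and> b = \<infinity> \<longrightarrow> J = \<infinity>)"
proof -
  have fV: "finite V" and fW: "finite W" using assms(1,2) unfolding graph_def by auto
  have fJ: "finite (join_verts V W)" using fV fW unfolding join_verts_def by auto
  have symA: "symm_on V (mod_dist_matrix E)" using assms(1) by (rule mod_symm)
  have symB: "symm_on W (mod_dist_matrix F)" using assms(2) by (rule mod_symm)
  have symJ: "symm_on (join_verts V W) (jm E F)" using assms(1,2) by (rule jm_symm)
  have Jeq: "J = curv_index (join_verts V W) (jm E F)"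
    unfolding J_def curvature_index_def
    by (rule curv_cong) (auto intro: join_dist[OF assms(1,2)])
  have a': "a = curv_index V (mod_dist_matrix E)" unfolding a_def mod_curvature_index_def ..
  have b': "b = curv_index W (mod_dist_matrix F)" unfolding b_def mod_curvature_index_def ..
  note SJ = S_join[OF assms(1,2)]
  note memJ = curv_S_mem[OF fJ symJ, folded Jeq]
  note emJ = curv_S_empty[OF fJ symJ, folded Jeq]
  consider (ff) ra rb where "a = ereal ra" "b = ereal rb" | (infin) rb where "a = \<infinity>" "b = ereal rb"
    | (fi) ra where "a = ereal ra" "b = \<infinity>" | (ii) "a = \<infinity>" "b = \<infinity>"
    using curv_not_minf[of V "mod_dist_matrix E"] curv_not_minf[of W "mod_dist_matrix F"]
    unfolding a'[symmetric] b'[symmetric] by blast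
  then show ?thesis
  proof cases
    case ff
    note PA = P_fin[OF fV symA ff(1)[unfolded a']]
    note PB = P_fin[OF fW symB ff(2)[unfolded b']]
    have S: "d \<in> Sset (join_verts V W) (jm E F) \<longleftrightarrow>
        (\<exists>\<sigma> \<tau>. \<sigma> + \<tau> = 1 \<and> d - \<tau> = \<sigma> * ra \<and> d - \<sigma> = \<tau> * rb)" for d
      unfolding SJ PA PB ..
    show ?thesis
    proof (cases "ra + rb = 2")
      case False
      define s where "s = (rb - 1) / (ra + rb - 2)"
      define d where "d = (ra * rb - 1) / (ra + rb - 2)"
      have nz: "ra + rb - 2 \<noteq> 0" using False by simp
      have "d - (1 - s) = s * ra" unfolding d_def s_def using alg1[OF nz refl] .
      moreover have "d - s = (1 - s) * rb" unfolding d_def s_def using alg2[OF nz refl] .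
      ultimately have "d \<in> Sset (join_verts V W) (jm E F)" unfolding S by (intro exI[of _ s] exI[of _ "1 - s"]) simp
      then have "J = ereal d" by (rule memJ)
      moreover have "a + b \<noteq> 2" using False ff by simp
      moreover have "\<not> (a = 1 \<and> b = 1)" using False ff by (auto simp: one_ereal_def)
      ultimately show ?thesis using ff by (simp add: d_def)
    next
      case sum2: True
      show ?thesis
      proof (cases "ra = 1")
        case True
        then have "rb = 1" using sum2 by simp
        have "1 \<in> Sset (join_verts V W) (jm E F)" unfolding S using True \<open>rb = 1\<close>
          by (intro exI[of _ 1] exI[of _ 0]) simp
        then have "J = ereal 1" by (rule memJ)
        then show ?thesis using ff True \<open>rb = 1\<close> by (simp add: one_ereal_def)
      next
        case False
        have "Sset (join_verts V W) (jm E F) = {}"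
        proof (rule ccontr)
          assume "Sset (join_verts V W) (jm E F) \<noteq> {}"
          then obtain d \<sigma> \<tau> where h: "\<sigma> + \<tau> = 1" "d - \<tau> = \<sigma> * ra" "d - \<sigma> = \<tau> * rb" using S by blast
          have "(1 - rb) + \<sigma> * (ra + rb - 2) = 0"
          proof -
            have t: "\<tau> = 1 - \<sigma>" using h(1) by simp
            have "(1 - \<sigma>) + \<sigma> * ra = \<sigma> + (1 - \<sigma>) * rb" using h(2,3) unfolding t by linarith
            then show ?thesis by (simp add: algebra_simps)
          qed
          then have "rb = 1" using sum2 by simp
          then show False using sum2 False by simp
        qed
        then have "J = \<infinity>" by (rule emJ)
        moreover have "a + b = 2" using ff sum2 by simp
        ultimately show ?thesis using ff False by simp
      qed
    qed
  next
    case infin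
    note PA = P_inf[OF fV symA infin(1)[unfolded a']]
    note PB = P_fin[OF fW symB infin(2)[unfolded b']]
    have "rb \<in> Sset (join_verts V W) (jm E F)" unfolding SJ PA PB
      by (intro exI[of _ 0] exI[of _ 1]) simp
    then have "J = ereal rb" by (rule memJ)
    then show ?thesis using infin by simp
  next
    case fi
    note PA = P_fin[OF fV symA fi(1)[unfolded a']]
    note PB = P_inf[OF fW symB fi(2)[unfolded b']]
    have "ra \<in> Sset (join_verts V W) (jm E F)" unfolding SJ PA PB
      by (intro exI[of _ 1] exI[of _ 0]) simp
    then have "J = ereal ra" by (rule memJ)
    then show ?thesis using fi by simp
  next
    case ii
    note PA = P_inf[OF fV symA ii(1)[unfolded a']]
    note PB = P_inf[OF fW symB ii(2)[unfolded b']]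
    have "d \<notin> Sset (join_verts V W) (jm E F)" for d unfolding SJ PA PB by auto
    then have "Sset (join_verts V W) (jm E F) = {}" by blast
    then have "J = \<infinity>" by (rule emJ)
    then show ?thesis using ii by simp
  qed
qed

end
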